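(* Let $F$ be a field of characteristic $2$ and let $a,b\in F$ with $[F^2(a,b):F^2]=4$. Let $\beta=\langle a+1,a,b,ab\rangle_b$ be the diagonal bilinear form. Then $\beta$ is anisotropic, $G_F(q_\beta)=F^2(a,b)^*$, and $G_F(\beta)=F^2(a)^*$. In particular, $G_F(\beta)\subsetneq G_F(q_\beta)$.
   Context: $\langle c_1,\dots,c_n\rangle_b$ denotes the diagonal bilinear form $\sum c_ix_iy_i$. For a bilinear form $\beta$ on $V$, $q_\beta$ is the totally singular quadratic form $x\mapsto\beta(x,x)$. For a bilinear or quadratic form $\psi$, $G_F(\psi)=\{c\in F^*:\psi\cong c\psi\}$ is its group of similarity factors. *)

theory Defs
  imports "HOL-Analysis.Analysis"
begin

definition is_subfield :: "'a::field set \<Rightarrow> bool" where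
  "is_subfield K \<longleftrightarrow> 0 \<in> K \<and> 1 \<in> K \<and>
     (\<forall>x\<in>K. \<forall>y\<in>K. x + y \<in> K \<and> x - y \<in> K \<and> x * y \<in> K) \<and>
     (\<forall>x\<in>K. inverse x \<in> K)"

definition gen_field :: "'a::field set \<Rightarrow> 'a set \<Rightarrow> 'a set" where
  "gen_field K A = \<Inter>{L. is_subfield L \<and> K \<union> A \<subseteq> L}"

definition squares :: "'a::field set" where
  "squares = range (\<lambda>x. x ^ 2)"

definition ext_degree_eq :: "'a::field set \<Rightarrow> 'a set \<Rightarrow> nat \<Rightarrow> bool" where
  "ext_degree_eq L K n \<longleftrightarrow> (\<exists>v::nat \<Rightarrow> 'a. (\<forall>i<n. v i \<in> L) \<and>
     (\<forall>c. (\<forall>i<n. c i \<in> K) \<and> (\<Sum>i<n. c i * v i) = 0 \<longrightarrow> (\<forall>i<n. c i = 0)) \<and>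
     (\<forall>x\<in>L. \<exists>c. (\<forall>i<n. c i \<in> K) \<and> x = (\<Sum>i<n. c i * v i)))"

definition diag_bil4 :: "'a::field \<Rightarrow> 'a \<Rightarrow> 'a \<Rightarrow> 'a \<Rightarrow> 'a^4 \<Rightarrow> 'a^4 \<Rightarrow> 'a" where
  "diag_bil4 c1 c2 c3 c4 x y =
     c1 * x$1 * y$1 + c2 * x$2 * y$2 + c3 * x$3 * y$3 + c4 * x$4 * y$4"

definition qform :: "('v \<Rightarrow> 'v \<Rightarrow> 'a) \<Rightarrow> 'v \<Rightarrow> 'a" where
  "qform B x = B x x"

definition anisotropic_bil :: "('a::field^'n \<Rightarrow> 'a^'n \<Rightarrow> 'a) \<Rightarrow> bool" where
  "anisotropic_bil B \<longleftrightarrow> (\<forall>x. x \<noteq> 0 \<longrightarrow> B x x \<noteq> 0)"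

definition sim_factors_bil :: "('a::field^'n \<Rightarrow> 'a^'n \<Rightarrow> 'a) \<Rightarrow> 'a set" where
  "sim_factors_bil B = {c. c \<noteq> 0 \<and> (\<exists>M::'a^'n^'n. invertible M \<and>
      (\<forall>x y. B (M *v x) (M *v y) = c * B x y))}"

definition sim_factors_quad :: "('a::field^'n \<Rightarrow> 'a) \<Rightarrow> 'a set" where
  "sim_factors_quad Q = {c. c \<noteq> 0 \<and> (\<exists>M::'a^'n^'n. invertible M \<and>
      (\<forall>x. Q (M *v x) = c * Q x))}"

end

theory Submission
  imports Defs
begin


lemma sum4: "(\<Sum>i<(4::nat). f i) = f 0 + f 1 + f 2 + f 3"
  by (simp add: numeral_eq_Suc)
lemma all4: "(\<forall>i<(4::nat). P i) \<longleftrightarrow> P 0 \<and> P 1 \<and> P 2 \<and> P 3"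
  by (auto simp: numeral_eq_Suc less_Suc_eq)

definition v4 :: "'b \<Rightarrow> 'b \<Rightarrow> 'b \<Rightarrow> 'b \<Rightarrow> 'b^4" where
  "v4 p q r s = (\<chi> i. if i = 1 then p else if i = 2 then q else if i = 3 then r else s)"

lemma v4_nth [simp]: "v4 p q r s $ 1 = p" "v4 p q r s $ 2 = q" "v4 p q r s $ 3 = r" "v4 p q r s $ 4 = s"
  by (simp_all add: v4_def)

lemma mv_comp: "((M::'a::comm_ring_1^4^4) *v x) $ i = M$i$1*x$1 + M$i$2*x$2 + M$i$3*x$3 + M$i$4*x$4"
  by (simp add: matrix_vector_mult_def sum_4)

lemma gen_field_eq:
  assumes "is_subfield L0" "K \<union> A \<subseteq> L0" "\<And>L. is_subfield L \<Longrightarrow> K \<union> A \<subseteq> L \<Longrightarrow> L0 \<subseteq> L"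
  shows "gen_field K A = L0"
  using assms unfolding gen_field_def by blast

lemma inv_from_ker:
  fixes M :: "'a::field^'n^'n"
  assumes "\<And>x. M *v x = 0 \<Longrightarrow> x = 0"
  shows "invertible M"
  using assms by (simp add: invertible_left_inverse matrix_left_invertible_ker)

lemma vec4_eq0: "(x::'a::zero^4) = 0 \<longleftrightarrow> x$1 = 0 \<and> x$2 = 0 \<and> x$3 = 0 \<and> x$4 = 0"
  by (simp add: vec_eq_iff forall_4)

lemma bil_xx: "diag_bil4 (a+1) a b (a*b) x x = (x$1)^2 + ((x$1)^2 + (x$2)^2)*a + (x$3)^2*b + (x$4)^2*(a*b)"
  by (simp add: diag_bil4_def power2_eq_square algebra_simps)

lemma QP_id: "(a+1)*((A+B*a)*xa + (B*a)*xb + (C*b)*xc + (D*a*b)*xd)*((A+B*a)*xa + (B*a)*xb + (C*b)*xc + (D*a*b)*xd) + a*((B*a+B)*xa + (B*a+A)*xb + (C*b+D*b)*xc + (D*a*b+C*b)*xd)*((B*a+B)*xa + (B*a+A)*xb + (C*b+D*b)*xc + (D*a*b+C*b)*xd) + b*((C+D*a)*xa + (D*a)*xb + (A)*xc + (B*a)*xd)*((C+D*a)*xa + (D*a)*xb + (A)*xc + (B*a)*xd) + (a*b)*((C+D)*xa + (C)*xb + (B)*xc + (A)*xd)*((C+D)*xa + (C)*xb + (B)*xc + (A)*xd) = (A^2+B^2*a+C^2*b+D^2*(a*b)) * ((a+1)*xa*xa + a*xb*xb + b*xc*xc + (a*b)*xd*xd) + 2 * (D^2*a^2*b*xa*xb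 + D^2*a^2*b^2*xc*xd + D^2*a^3*b^2*xd^2 + 2*C*D*a*b*xa*xb + 2*C*D*a*b*xa^2 + 2*C*D*a*b^2*xc*xd + C*D*a*b^2*xc^2 + C*D*a^2*b^2*xd^2 + 2*C*D*a^2*b^2*xc*xd + C^2*a*b*xa*xb + C^2*a*b^2*xc*xd + C^2*a*b^2*xc^2 + 2*B*D*a*b*xa*xc + 2*B*D*a^2*b*xb*xd + B*D*a^2*b*xb*xc + 3*B*D*a^2*b*xa*xd + B*D*a^2*b*xa*xc + 2*B*D*a^3*b*xb*xd + 2*B*D*a^3*b*xa*xd + 2*B*C*a*b*xb*xc + 2*B*C*a*b*xa*xd + 3*B*C*a*b*xa*xc + B*C*a^2*b*xb*xd + 2*B*C*a^2*b*xb*xc + B*C*a^2*b*xa*xd + 2*B*C*a^2*b*xa*xc + 2*B^2*a^2*xa*xb + B^2*a^2*xa^2 + B^2*a^3*xb^2 + 2*B^2*a^3*xa*xb + B^2*a^3*xa^2 + 2*A*D*a*b*xb*xc + 2*A*D*a*b*xa*xd + A*D*a*b*xa*xc + A*D*a^2*b*xb*xd + A*D*a^2*b*xa*xd + 2*A*C*b*xa*xc + 2*A*C*a*b*xb*xd + A*C*a*b*xb*xc + A*C*a*b*xa*xd + A*C*a*b*xa*xc + 2*A*B*a*xa*xb + A*B*a*xa^2 + 2*A*B*a*b*xc*xd + A*B*a^2*xb^2 + 2*A*B*a^2*xa*xb + A*B*a^2*xa^2)" for A B C D a b xa xb xc xd :: "'a::comm_ring_1"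
  by (simp add: algebra_simps power2_eq_square power3_eq_cube)

lemma BP_id: "C = 0 \<Longrightarrow> D = 0 \<Longrightarrow> (a+1)*((A+B*a)*xa + (B*a)*xb + (C*b)*xc + (D*a*b)*xd)*((A+B*a)*ya + (B*a)*yb + (C*b)*yc + (D*a*b)*yd) + a*((B*a+B)*xa + (B*a+A)*xb + (C*b+D*b)*xc + (D*a*b+C*b)*xd)*((B*a+B)*ya + (B*a+A)*yb + (C*b+D*b)*yc + (D*a*b+C*b)*yd) + b*((C+D*a)*xa + (D*a)*xb + (A)*xc + (B*a)*xd)*((C+D*a)*ya + (D*a)*yb + (A)*yc + (B*a)*yd) + (a*b)*((C+D)*xa + (C)*xb + (B)*xc + (A)*xd)*((C+D)*ya + (C)*yb + (B)*yc + (A)*yd) = (A^2+B^2*a+C^2*b+D^2*(a*b)) * ((a+1)*xa*ya + a*xb*yb + b*xc*yc + (a*b)*xd*yd) + 2 * (B^2*a^2*xb*ya + B^2*a^2*xa*yb + B^2*a^2*xa*ya + B^2*a^3*xb*yb + B^2*a^3*xb*ya + B^2*a^3*xa*yb + B^2*a^3*xa*ya + A*B*a*xb*ya + A*B*a*xa*yb + A*B*a*xa*ya + A*B*a*b*xd*yc + A*B*a*b*xc*yd + A*B*a^2*xb*yb + A*B*a^2*xb*ya + A*B*a^2*xa*yb + A*B*a^2*xa*ya)" for A B C D a b xa xb xc xd ya yb yc yd :: "'a::comm_ring_1"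
  by (simp add: algebra_simps power2_eq_square power3_eq_cube)




locale ch2 =
  fixes a b :: "'a::field"
  assumes two: "(2::'a) = 0"
begin

lemma two_mult[simp]: "2 * x = (0::'a)" using two by simp
lemma add_self[simp]: "x + x = (0::'a)" by (metis mult_2 two_mult)
lemma neg_self[simp]: "- x = (x::'a)" by (simp add: neg_eq_iff_add_eq_0)
lemma diff_eq_add: "x - y = x + (y::'a)" by (metis diff_conv_add_uminus neg_self)
lemma sq_add: "(x + y)^2 = x^2 + (y::'a)^2"
proof -
  have "(x + y)^2 = x^2 + y^2 + 2*x*y" by (simp add: power2_eq_square algebra_simps)
  then show ?thesis by simp
qed
lemma sq_inj: assumes "x^2 = (y::'a)^2" shows "x = y"
proof -
  have "(x + y)^2 = 0" using assms by (simp add: sq_add)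
  then have "x + y = 0" by simp
  then show ?thesis by (metis add_self add_left_cancel)
qed

lemma sq_in[simp]: "x^2 \<in> (squares::'a set)" by (simp add: squares_def)
lemma K_E: "k \<in> (squares::'a set) \<Longrightarrow> (\<And>t. k = t^2 \<Longrightarrow> P) \<Longrightarrow> P"
  unfolding squares_def by blast
lemma K0[simp]: "(0::'a) \<in> squares" using sq_in[of 0] by simp
lemma K1[simp]: "(1::'a) \<in> squares" using sq_in[of 1] by simp
lemma K_add: "p \<in> squares \<Longrightarrow> q \<in> squares \<Longrightarrow> p + q \<in> (squares::'a set)"
  by (metis K_E sq_add sq_in)
lemma K_mult: "p \<in> squares \<Longrightarrow> q \<in> squares \<Longrightarrow> p * q \<in> (squares::'a set)"
  by (metis K_E power_mult_distrib sq_in)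
lemma K_diff: "p \<in> squares \<Longrightarrow> q \<in> squares \<Longrightarrow> p - q \<in> (squares::'a set)"
  by (simp add: K_add diff_eq_add)
lemma K_inv: "p \<in> squares \<Longrightarrow> inverse p \<in> (squares::'a set)"
  by (metis K_E power_inverse sq_in)
lemma K_div: "p \<in> squares \<Longrightarrow> q \<in> squares \<Longrightarrow> p / q \<in> (squares::'a set)"
  by (simp add: K_inv K_mult divide_inverse)

definition Lab :: "'a set" where
  "Lab = {p + q*a + r*b + s*(a*b) | p q r s. p \<in> squares \<and> q \<in> squares \<and> r \<in> squares \<and> s \<in> squares}"
definition La :: "'a set" where
  "La = {p + q*a | p q. p \<in> squares \<and> q \<in> squares}"

lemma LabI: "p \<in> squares \<Longrightarrow> q \<in> squares \<Longrightarrow> r \<in> squares \<Longrightarrow> s \<in> squares \<Longrightarrow>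
   x = p + q*a + r*b + s*(a*b) \<Longrightarrow> x \<in> Lab"
  unfolding Lab_def by blast
lemma LabE: "x \<in> Lab \<Longrightarrow> (\<And>p q r s. p \<in> squares \<Longrightarrow> q \<in> squares \<Longrightarrow> r \<in> squares \<Longrightarrow> s \<in> squares \<Longrightarrow>
   x = p + q*a + r*b + s*(a*b) \<Longrightarrow> P) \<Longrightarrow> P"
  unfolding Lab_def by blast
lemma LaI: "p \<in> squares \<Longrightarrow> q \<in> squares \<Longrightarrow> x = p + q*a \<Longrightarrow> x \<in> La"
  unfolding La_def by blast
lemma LaE: "x \<in> La \<Longrightarrow> (\<And>p q. p \<in> squares \<Longrightarrow> q \<in> squares \<Longrightarrow> x = p + q*a \<Longrightarrow> P) \<Longrightarrow> P"
  unfolding La_def by blast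

lemma Lab_add: assumes "x \<in> Lab" "y \<in> Lab" shows "x + y \<in> Lab"
proof -
  obtain p q r s where 1: "p \<in> squares" "q \<in> squares" "r \<in> squares" "s \<in> squares" "x = p + q*a + r*b + s*(a*b)"
    using assms(1) by (rule LabE)
  obtain p2 q2 r2 s2 where 2: "p2 \<in> squares" "q2 \<in> squares" "r2 \<in> squares" "s2 \<in> squares" "y = p2 + q2*a + r2*b + s2*(a*b)"
    using assms(2) by (rule LabE)
  show ?thesis
    by (rule LabI[of "p+p2" "q+q2" "r+r2" "s+s2"]) (use 1 2 in \<open>simp_all add: K_add algebra_simps\<close>)
qed
lemma Lab_Kmult: assumes "k \<in> squares" "y \<in> Lab" shows "k * y \<in> Lab"
proof -
  obtain p q r s where 1: "p \<in> squares" "q \<in> squares" "r \<in> squares" "s \<in> squares" "y = p + q*a + r*b + s*(a*b)"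
    using assms(2) by (rule LabE)
  show ?thesis
    by (rule LabI[of "k * p" "k * q" "k * r" "k * s"]) (use 1 assms(1) in \<open>simp_all add: K_mult algebra_simps\<close>)
qed
lemma Lab_amult: assumes "y \<in> Lab" shows "a * y \<in> Lab"
proof -
  obtain p q r s where 1: "p \<in> squares" "q \<in> squares" "r \<in> squares" "s \<in> squares" "y = p + q*a + r*b + s*(a*b)"
    using assms by (rule LabE)
  have "q*a^2 \<in> squares" "s*a^2 \<in> squares" using 1 by (simp_all add: K_mult)
  then show ?thesis
    by (intro LabI[of "q*a^2" "p" "s*a^2" "r"]) (use 1 in \<open>simp_all add: algebra_simps power2_eq_square\<close>)
qed
lemma Lab_bmult: assumes "y \<in> Lab" shows "b * y \<in> Lab"
proof -
  obtain p q r s where 1: "p \<in> squares" "q \<in> squares" "r \<in> squares" "s \<in> squares" "y = p + q*a + r*b + s*(a*b)"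
    using assms by (rule LabE)
  have "r*b^2 \<in> squares" "s*b^2 \<in> squares" using 1 by (simp_all add: K_mult)
  then show ?thesis
    by (intro LabI[of "r*b^2" "s*b^2" "p" "q"]) (use 1 in \<open>simp_all add: algebra_simps power2_eq_square\<close>)
qed
lemma Lab_mult: assumes "x \<in> Lab" "y \<in> Lab" shows "x * y \<in> Lab"
proof -
  obtain p q r s where 1: "p \<in> squares" "q \<in> squares" "r \<in> squares" "s \<in> squares" "x = p + q*a + r*b + s*(a*b)"
    using assms(1) by (rule LabE)
  have "x * y = p*y + q*(a*y) + r*(b*y) + s*(a*(b*y))" using 1(5) by (simp add: algebra_simps)
  then show ?thesis using 1 assms(2)
    by (simp add: Lab_add Lab_Kmult Lab_amult Lab_bmult)
qed
lemma Lab_K: "k \<in> squares \<Longrightarrow> k \<in> Lab"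
  by (rule LabI[of k 0 0 0]) simp_all
lemma Lab_a: "a \<in> Lab" by (rule LabI[of 0 1 0 0]) simp_all
lemma Lab_b: "b \<in> Lab" by (rule LabI[of 0 0 1 0]) simp_all
lemma Lab_inv: assumes "x \<in> Lab" shows "inverse x \<in> Lab"
proof (cases "x = 0")
  case True then show ?thesis by (simp add: Lab_K)
next
  case False
  then have "inverse x = (inverse x)^2 * x" by (simp add: power2_eq_square)
  then show ?thesis using assms by (metis Lab_Kmult sq_in)
qed
lemma Lab_subfield: "is_subfield Lab"
  unfolding is_subfield_def
  by (simp add: Lab_K Lab_add Lab_mult Lab_inv diff_eq_add)

lemma gen_ab: "gen_field squares {a, b} = Lab"
proof (rule gen_field_eq)
  show "is_subfield Lab" by (rule Lab_subfield)
  show "squares \<union> {a, b} \<subseteq> Lab" using Lab_K Lab_a Lab_b by blast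
  fix L assume L: "is_subfield L" "squares \<union> {a, b} \<subseteq> L"
  show "Lab \<subseteq> L"
  proof
    fix x assume "x \<in> Lab"
    then obtain p q r s where 1: "p \<in> squares" "q \<in> squares" "r \<in> squares" "s \<in> squares" "x = p + q*a + r*b + s*(a*b)"
      by (rule LabE)
    have "p \<in> L" "q \<in> L" "r \<in> L" "s \<in> L" "a \<in> L" "b \<in> L" using 1 L(2) by auto
    with L(1) show "x \<in> L" unfolding 1(5) is_subfield_def by meson
  qed
qed

lemma La_add: assumes "x \<in> La" "y \<in> La" shows "x + y \<in> La"
proof -
  obtain p q where 1: "p \<in> squares" "q \<in> squares" "x = p + q*a" using assms(1) by (rule LaE)
  obtain p2 q2 where 2: "p2 \<in> squares" "q2 \<in> squares" "y = p2 + q2*a" using assms(2) by (rule LaE)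
  show ?thesis
    by (rule LaI[of "p+p2" "q+q2"]) (use 1 2 in \<open>simp_all add: K_add algebra_simps\<close>)
qed
lemma La_Kmult: assumes "k \<in> squares" "y \<in> La" shows "k * y \<in> La"
proof -
  obtain p q where 1: "p \<in> squares" "q \<in> squares" "y = p + q*a" using assms(2) by (rule LaE)
  show ?thesis
    by (rule LaI[of "k * p" "k * q"]) (use 1 assms(1) in \<open>simp_all add: K_mult algebra_simps\<close>)
qed
lemma La_amult: assumes "y \<in> La" shows "a * y \<in> La"
proof -
  obtain p q where 1: "p \<in> squares" "q \<in> squares" "y = p + q*a" using assms by (rule LaE)
  have "q*a^2 \<in> squares" using 1 by (simp_all add: K_mult)
  then show ?thesis
    by (intro LaI[of "q*a^2" "p"]) (use 1 in \<open>simp_all add: algebra_simps power2_eq_square\<close>)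
qed
lemma La_mult: assumes "x \<in> La" "y \<in> La" shows "x * y \<in> La"
proof -
  obtain p q where 1: "p \<in> squares" "q \<in> squares" "x = p + q*a" using assms(1) by (rule LaE)
  have "x * y = p*y + q*(a*y)" using 1(3) by (simp add: algebra_simps)
  then show ?thesis using 1 assms(2) by (simp add: La_add La_Kmult La_amult)
qed
lemma La_K: "k \<in> squares \<Longrightarrow> k \<in> La"
  by (rule LaI[of k 0]) simp_all
lemma La_a: "a \<in> La" by (rule LaI[of 0 1]) simp_all
lemma La_inv: assumes "x \<in> La" shows "inverse x \<in> La"
proof (cases "x = 0")
  case True then show ?thesis by (simp add: La_K)
next
  case False
  then have "inverse x = (inverse x)^2 * x" by (simp add: power2_eq_square)
  then show ?thesis using assms by (metis La_Kmult sq_in)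
qed
lemma La_subfield: "is_subfield La"
  unfolding is_subfield_def
  by (simp add: La_K La_add La_mult La_inv diff_eq_add)

lemma gen_a: "gen_field squares {a} = La"
proof (rule gen_field_eq)
  show "is_subfield La" by (rule La_subfield)
  show "squares \<union> {a} \<subseteq> La" using La_K La_a by blast
  fix L assume L: "is_subfield L" "squares \<union> {a} \<subseteq> L"
  show "La \<subseteq> L"
  proof
    fix x assume "x \<in> La"
    then obtain p q where 1: "p \<in> squares" "q \<in> squares" "x = p + q*a" by (rule LaE)
    have "p \<in> L" "q \<in> L" "a \<in> L" using 1 L(2) by auto
    with L(1) show "x \<in> L" unfolding 1(3) is_subfield_def by meson
  qed
qed

lemma La_sub_Lab: "La \<subseteq> Lab"
proof
  fix x assume "x \<in> La"
  then obtain p q where 1: "p \<in> squares" "q \<in> squares" "x = p + q*a" by (rule LaE)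
  show "x \<in> Lab" by (rule LabI[of p q 0 0]) (use 1 in simp_all)
qed

end


lemma cross_id: "(p1 * q2 - p2 * q1) * (p0 + q0 * e) + (p2 * q0 - p0 * q2) * (p1 + q1 * e) + (p0 * q1 - p1 * q0) * (p2 + q2 * e) = (0::'a::comm_ring_1)"
  by (simp add: algebra_simps)
lemma cross_id2: "p1 * (p0 + q0 * e) + (- p0) * (p1 + q1 * e) + 0 * (p2 + q2 * e) = (p1 * q0 - p0 * q1) * (e::'a::comm_ring_1)"
  by (simp add: algebra_simps)
lemma cross_id3: "q1 * (p0 + q0 * e) + (- q0) * (p1 + q1 * e) + 0 * (p2 + q2 * e) = (p0 * q1 - p1 * q0) * (1::'a::comm_ring_1)"
  by (simp add: algebra_simps)

context ch2 begin

lemma add_eq0: "x + y = (0::'a) \<Longrightarrow> x = y"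
  by (metis add_self add_left_cancel)

lemma no_2span:
  fixes L :: "'a set" and e :: 'a
  assumes deg: "ext_degree_eq L squares 4"
    and span: "\<And>x. x \<in> L \<Longrightarrow> \<exists>p q. p \<in> squares \<and> q \<in> squares \<and> x = p + q * e"
  shows False
proof -
  obtain v :: "nat \<Rightarrow> 'a" where vL: "\<forall>i<4. v i \<in> L"
    and ind: "\<forall>c. (\<forall>i<4. c i \<in> squares) \<and> (\<Sum>i<4. c i * v i) = 0 \<longrightarrow> (\<forall>i<4. c i = (0::'a))"
    using deg unfolding ext_degree_eq_def by (elim exE conjE) (rule that)
  have "v 0 \<in> L" "v 1 \<in> L" "v 2 \<in> L" using vL by simp_all
  then obtain p0 q0 p1 q1 p2 q2 where
    K: "p0 \<in> squares" "q0 \<in> squares" "p1 \<in> squares" "q1 \<in> squares" "p2 \<in> squares" "q2 \<in> squares"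
    and V: "v 0 = p0 + q0 * e" "v 1 = p1 + q1 * e" "v 2 = p2 + q2 * e"
    using span by meson
  have key: False if c: "c0 \<in> squares" "c1 \<in> squares" "c2 \<in> squares" "c0 * v 0 + c1 * v 1 + c2 * v 2 = 0"
      and nz: "c0 \<noteq> 0 \<or> c1 \<noteq> 0 \<or> c2 \<noteq> 0" for c0 c1 c2
  proof -
    define c where "c = (\<lambda>i::nat. if i = 0 then c0 else if i = 1 then c1 else if i = 2 then c2 else 0)"
    have "(\<forall>i<4. c i \<in> squares) \<and> (\<Sum>i<4. c i * v i) = 0"
      using c by (simp add: all4 sum4 c_def)
    with spec[OF ind, of c] have "\<forall>i<4. c i = 0" by (rule mp)
    then show False using nz by (simp add: all4 c_def)
  qed
  show False
  proof (cases "p0 * q1 - p1 * q0 = 0")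
    case False
    show False
      by (rule key[of "p1 * q2 - p2 * q1" "p2 * q0 - p0 * q2" "p0 * q1 - p1 * q0"])
         (use K False in \<open>simp_all only: V cross_id, simp_all add: K_mult K_diff\<close>)
  next
    case cz: True
    show False
    proof (cases "p0 \<noteq> 0 \<or> p1 \<noteq> 0")
      case True
      show False
        by (rule key[of p1 "- p0" 0]) (use K True cz in \<open>simp_all only: V cross_id2, auto simp: algebra_simps\<close>)
    next
      case pz: False
      show False
      proof (cases "q0 \<noteq> 0 \<or> q1 \<noteq> 0")
        case True
        show False
          by (rule key[of q1 "- q0" 0]) (use K True cz pz in \<open>simp_all only: V cross_id3, auto simp: algebra_simps\<close>)
      next
        case False
        show False
          by (rule key[of 1 0 0]) (use K V False pz in simp_all)
      qed
    qed
  qed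
qed

end


locale ch2deg = ch2 +
  assumes deg: "ext_degree_eq (gen_field squares {a, b}) squares 4"
begin

lemma degLab: "ext_degree_eq Lab squares 4" using deg gen_ab by simp

lemma a_notK: "a \<notin> squares"
proof
  assume aK: "a \<in> squares"
  show False
  proof (rule no_2span[OF degLab, of b])
    fix x assume "x \<in> Lab"
    then obtain p q r s where 1: "p \<in> squares" "q \<in> squares" "r \<in> squares" "s \<in> squares" "x = p + q*a + r*b + s*(a*b)"
      by (rule LabE)
    show "\<exists>p q. p \<in> squares \<and> q \<in> squares \<and> x = p + q * b"
      by (rule exI[of _ "p + q*a"], rule exI[of _ "r + s*a"]) (use 1 aK in \<open>simp add: K_add K_mult algebra_simps\<close>)
  qed
qed

lemma b_notLa: "b \<notin> La"
proof
  assume "b \<in> La"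
  then obtain p0 q0 where b0: "p0 \<in> squares" "q0 \<in> squares" "b = p0 + q0*a" by (rule LaE)
  show False
  proof (rule no_2span[OF degLab, of a])
    fix x assume "x \<in> Lab"
    then obtain p q r s where 1: "p \<in> squares" "q \<in> squares" "r \<in> squares" "s \<in> squares" "x = p + q*a + r*b + s*(a*b)"
      by (rule LabE)
    have m1: "p + r*p0 + s*q0*a^2 \<in> squares" using 1 b0 by (simp add: K_add K_mult)
    have m2: "q + r*q0 + s*p0 \<in> squares" using 1 b0 by (simp add: K_add K_mult)
    have "x = (p + r*p0 + s*q0*a^2) + (q + r*q0 + s*p0) * a"
      using 1(5) b0(3) by (simp add: algebra_simps power2_eq_square)
    then show "\<exists>p q. p \<in> squares \<and> q \<in> squares \<and> x = p + q * a" using m1 m2 by blast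
  qed
qed

lemma a_nz: "a \<noteq> 0" using a_notK K0 by metis
lemma b_nz: "b \<noteq> 0" using b_notLa La_K K0 by metis

lemma lin1: assumes "p \<in> squares" "q \<in> squares" "p + q * a = 0" shows "p = 0 \<and> q = 0"
proof (cases "q = 0")
  case True then show ?thesis using assms by simp
next
  case False
  then have "a = p / q" using add_eq0[OF assms(3)] by (simp add: field_simps)
  then have "a \<in> squares" using assms by (simp add: K_div)
  then show ?thesis using a_notK by simp
qed

lemma indep: assumes "p \<in> squares" "q \<in> squares" "r \<in> squares" "s \<in> squares"
  "p + q*a + r*b + s*(a*b) = 0" shows "p = 0 \<and> q = 0 \<and> r = 0 \<and> s = 0"
proof -
  have t: "r + s * a \<in> La" using assms by (intro LaI[of r s]) simp_all
  have u: "p + q * a \<in> La" using assms by (intro LaI[of p q]) simp_all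
  have "r + s * a = 0"
  proof (rule ccontr)
    assume nz: "r + s * a \<noteq> 0"
    have "b * (r + s*a) + (p + q*a) = 0" using assms(5) by (simp add: algebra_simps)
    then have "b * (r + s*a) = p + q*a" by (rule add_eq0)
    then have "b = (p + q*a) * inverse (r + s*a)" using nz by (simp add: field_simps)
    then have "b \<in> La" using t u by (simp add: La_mult La_inv)
    then show False using b_notLa by simp
  qed
  then have rs: "r = 0 \<and> s = 0" using lin1 assms by blast
  then have "p + q * a = 0" using assms(5) by simp
  then show ?thesis using rs lin1 assms by blast
qed

lemma coef_eq: assumes "p \<in> squares" "q \<in> squares" "r \<in> squares" "s \<in> squares"
  "p2 \<in> squares" "q2 \<in> squares" "r2 \<in> squares" "s2 \<in> squares"
  "p + q*a + r*b + s*(a*b) = p2 + q2*a + r2*b + s2*(a*b)"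
  shows "p = p2 \<and> q = q2 \<and> r = r2 \<and> s = s2"
proof -
  have "(p - p2) + (q - q2)*a + (r - r2)*b + (s - s2)*(a*b) = 0" using assms(9) by (simp add: algebra_simps)
  then have "p - p2 = 0 \<and> q - q2 = 0 \<and> r - r2 = 0 \<and> s - s2 = 0"
    using assms by (intro indep) (simp_all add: K_diff)
  then show ?thesis by simp
qed

end


definition Mf :: "'a::comm_ring_1 \<Rightarrow> 'a \<Rightarrow> 'a \<Rightarrow> 'a \<Rightarrow> 'a \<Rightarrow> 'a \<Rightarrow> 'a^4^4" where
  "Mf A B C D a b = v4 (v4 (A+B*a) (B*a) (C*b) (D*a*b)) (v4 (B*a+B) (B*a+A) (C*b+D*b) (D*a*b+C*b))
      (v4 (C+D*a) (D*a) A (B*a)) (v4 (C+D) C B A)"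

lemma P1_id: "(A^2+B^2*a+C^2*b+D^2*(a*b))*(a+1) = (A+B*a)^2 + (A+B)^2*a + (C+D*a)^2*b + (C+D)^2*(a*b) + 2*(- 2*C*D*a*b - 2*A*B*a)"
  for A B C D a b :: "'a::comm_ring_1"
  by (simp add: algebra_simps power2_eq_square)
lemma P2_id: "(A^2+B^2*a+C^2*b+D^2*(a*b))*a = (B*a)^2 + A^2*a + (D*a)^2*b + C^2*(a*b)"
  for A B C D a b :: "'a::comm_ring_1"
  by (simp add: algebra_simps power2_eq_square)
lemma P3_id: "(a+1)*(A+B*a)*(B*a) + a*(B-B*a)*(A-B*a) + b*(C+D*a)*(D*a) + (a*b)*(C+D)*C
   = (a*b)*(C^2 + D^2*a) + 2*(C*D*a*b + B^2*a^3 + A*B*a)"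
  for A B C D a b :: "'a::comm_ring_1"
  by (simp add: algebra_simps power2_eq_square power3_eq_cube)

context ch2deg begin

lemma bil00[simp]: "diag_bil4 (a+1) a b (a*b) 0 0 = 0" by (simp add: diag_bil4_def)

lemma aniso: "anisotropic_bil (diag_bil4 (a+1) a b (a*b))"
  unfolding anisotropic_bil_def
proof (intro allI impI notI)
  fix x :: "'a^4" assume nz: "x \<noteq> 0" and z: "diag_bil4 (a+1) a b (a*b) x x = 0"
  have "(x$1)^2 + ((x$1)^2 + (x$2)^2)*a + (x$3)^2*b + (x$4)^2*(a*b) = 0" using z by (simp add: bil_xx)
  then have "(x$1)^2 = 0 \<and> (x$1)^2 + (x$2)^2 = 0 \<and> (x$3)^2 = 0 \<and> (x$4)^2 = 0"
    by (intro indep) (simp_all add: K_add)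
  then have "x = 0" by (auto simp: vec4_eq0)
  with nz show False by simp
qed

lemma q_Lab: "diag_bil4 (a+1) a b (a*b) x x \<in> Lab"
  unfolding bil_xx by (rule LabI[OF _ _ _ _ refl]) (simp_all add: K_add)

lemma inv_lemma: assumes "c \<noteq> 0" "\<And>x. diag_bil4 (a+1) a b (a*b) (M *v x) (M *v x) = c * diag_bil4 (a+1) a b (a*b) x x"
  shows "invertible M"
proof (rule inv_from_ker)
  fix x assume "M *v x = 0"
  then have "c * diag_bil4 (a+1) a b (a*b) x x = 0" using assms(2)[of x] by simp
  then have "diag_bil4 (a+1) a b (a*b) x x = 0" using assms(1) by simp
  then show "x = 0" using aniso unfolding anisotropic_bil_def by blast
qed

lemma Gq_sub: "sim_factors_quad (qform (diag_bil4 (a+1) a b (a*b))) \<subseteq> Lab - {0}"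
proof
  fix c assume "c \<in> sim_factors_quad (qform (diag_bil4 (a+1) a b (a*b)))"
  then obtain M :: "'a^4^4" where c0: "c \<noteq> 0" and M: "\<And>x. qform (diag_bil4 (a+1) a b (a*b)) (M *v x) = c * qform (diag_bil4 (a+1) a b (a*b)) x"
    unfolding sim_factors_quad_def by blast
  have "qform (diag_bil4 (a+1) a b (a*b)) (v4 1 1 0 0) = 1"
    unfolding qform_def bil_xx by simp
  then have "c = qform (diag_bil4 (a+1) a b (a*b)) (M *v v4 1 1 0 0)" using M by simp
  then show "c \<in> Lab - {0}" using q_Lab c0 unfolding qform_def by simp
qed

lemma Gq_sup: assumes "c \<in> Lab" "c \<noteq> 0" shows "c \<in> sim_factors_quad (qform (diag_bil4 (a+1) a b (a*b)))"
proof -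
  obtain p q r s where 1: "p \<in> squares" "q \<in> squares" "r \<in> squares" "s \<in> squares" "c = p + q*a + r*b + s*(a*b)"
    using assms(1) by (rule LabE)
  obtain A B C D where ce: "c = A^2 + B^2*a + C^2*b + D^2*(a*b)"
    using 1 by (metis K_E)
  define M where "M = Mf A B C D a b"
  have eq: "diag_bil4 (a+1) a b (a*b) (M *v x) (M *v x) = c * diag_bil4 (a+1) a b (a*b) x x" for x
    using QP_id[where A=A and B=B and C=C and D=D and a=a and b=b and xa="x$1" and xb="x$2" and xc="x$3" and xd="x$4"]
    unfolding two_mult add_0_right diag_bil4_def mv_comp M_def Mf_def v4_nth ce .
  have "invertible M" by (rule inv_lemma[OF assms(2) eq])
  then show ?thesis using eq assms(2) unfolding sim_factors_quad_def qform_def by blast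
qed

lemma Gb_sup: assumes "c \<in> La" "c \<noteq> 0" shows "c \<in> sim_factors_bil (diag_bil4 (a+1) a b (a*b))"
proof -
  obtain p q where 1: "p \<in> squares" "q \<in> squares" "c = p + q*a"
    using assms(1) by (rule LaE)
  obtain A B where "c = A^2 + B^2*a"
    using 1 by (metis K_E)
  define C :: 'a where "C = 0"
  define D :: 'a where "D = 0"
  have ce: "c = A^2 + B^2*a + C^2*b + D^2*(a*b)" using \<open>c = A^2 + B^2*a\<close> by (simp add: C_def D_def)
  define M where "M = Mf A B C D a b"
  have eq: "diag_bil4 (a+1) a b (a*b) (M *v x) (M *v y) = c * diag_bil4 (a+1) a b (a*b) x y" for x y
    using BP_id[where A=A and B=B and C=C and D=D and a=a and b=b and xa="x$1" and xb="x$2" and xc="x$3" and xd="x$4" and ya="y$1" and yb="y$2" and yc="y$3" and yd="y$4", OF C_def D_def]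
    unfolding two_mult add_0_right diag_bil4_def mv_comp M_def Mf_def v4_nth ce .
  have "invertible M" by (rule inv_lemma[OF assms(2) eq])
  then show ?thesis using eq assms(2) unfolding sim_factors_bil_def by blast
qed

end


context ch2deg begin

lemma Gb_sub: "sim_factors_bil (diag_bil4 (a+1) a b (a*b)) \<subseteq> La - {0}"
proof
  fix c assume "c \<in> sim_factors_bil (diag_bil4 (a+1) a b (a*b))"
  then obtain M :: "'a^4^4" where c0: "c \<noteq> 0" and Mi: "invertible M"
    and M: "\<And>x y. diag_bil4 (a+1) a b (a*b) (M *v x) (M *v y) = c * diag_bil4 (a+1) a b (a*b) x y"
    unfolding sim_factors_bil_def by blast
  have "c \<in> sim_factors_quad (qform (diag_bil4 (a+1) a b (a*b)))"
    unfolding sim_factors_quad_def qform_def using c0 Mi M by blast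
  then have "c \<in> Lab" using Gq_sub by blast
  then obtain p q r s where 1: "p \<in> squares" "q \<in> squares" "r \<in> squares" "s \<in> squares" "c = p + q*a + r*b + s*(a*b)"
    by (rule LabE)
  obtain A B C D where ce: "c = A^2 + B^2*a + C^2*b + D^2*(a*b)"
    using 1 by (metis K_E)
  define u where "u = M *v v4 1 0 0 0"
  define w where "w = M *v v4 0 1 0 0"
  have h1: "diag_bil4 (a+1) a b (a*b) u u = c * (a+1)" unfolding u_def M by (simp add: diag_bil4_def)
  have h2: "diag_bil4 (a+1) a b (a*b) w w = c * a" unfolding w_def M by (simp add: diag_bil4_def)
  have h3: "diag_bil4 (a+1) a b (a*b) u w = 0" unfolding u_def w_def M by (simp add: diag_bil4_def)
  have "(u$1)^2 + ((u$1)^2 + (u$2)^2)*a + (u$3)^2*b + (u$4)^2*(a*b)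
      = (A+B*a)^2 + (A+B)^2*a + (C+D*a)^2*b + (C+D)^2*(a*b)"
    using h1 P1_id[where A=A and B=B and C=C and D=D and a=a and b=b] unfolding bil_xx ce by simp
  then have "(u$1)^2 = (A+B*a)^2 \<and> (u$1)^2 + (u$2)^2 = (A+B)^2 \<and> (u$3)^2 = (C+D*a)^2 \<and> (u$4)^2 = (C+D)^2"
    by (intro coef_eq) (simp_all add: K_add)
  then have u1: "u$1 = A+B*a" and u12: "(u$1 + u$2)^2 = (A+B)^2" and u3: "u$3 = C+D*a" and u4: "u$4 = C+D"
    by (auto intro: sq_inj simp: sq_add)
  have u2: "u$2 = B - B*a" using sq_inj[OF u12] u1 by (simp add: algebra_simps)
  have "(w$1)^2 + ((w$1)^2 + (w$2)^2)*a + (w$3)^2*b + (w$4)^2*(a*b)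
      = (B*a)^2 + A^2*a + (D*a)^2*b + C^2*(a*b)"
    using h2 P2_id[where A=A and B=B and C=C and D=D and a=a and b=b] unfolding bil_xx ce by simp
  then have "(w$1)^2 = (B*a)^2 \<and> (w$1)^2 + (w$2)^2 = A^2 \<and> (w$3)^2 = (D*a)^2 \<and> (w$4)^2 = C^2"
    by (intro coef_eq) (simp_all add: K_add)
  then have w1: "w$1 = B*a" and w12: "(w$1 + w$2)^2 = A^2" and w3: "w$3 = D*a" and w4: "w$4 = C"
    by (auto intro: sq_inj simp: sq_add)
  have w2: "w$2 = A - B*a" using sq_inj[OF w12] w1 by (simp add: algebra_simps)
  have "(a+1)*(A+B*a)*(B*a) + a*(B-B*a)*(A-B*a) + b*(C+D*a)*(D*a) + (a*b)*(C+D)*C = 0"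
    using h3 unfolding diag_bil4_def u1 u2 u3 u4 w1 w2 w3 w4 .
  then have "(a*b)*(C^2 + D^2*a) = 0" using P3_id[where A=A and B=B and C=C and D=D and a=a and b=b] by simp
  then have "C^2 + D^2*a = 0" using a_nz b_nz by simp
  then have "C^2 = 0 \<and> D^2 = 0" by (intro lin1) simp_all
  then have "c = A^2 + B^2*a" using ce by simp
  then have "c \<in> La" by (intro LaI[of "A^2" "B^2"]) simp_all
  then show "c \<in> La - {0}" using c0 by simp
qed

lemma strict: "La - {0} \<subset> Lab - {0}"
proof -
  have "b \<in> Lab - {0}" "b \<notin> La - {0}" using Lab_b b_nz b_notLa by auto
  then show ?thesis using La_sub_Lab by blast
qed

lemma main:
  shows "anisotropic_bil (diag_bil4 (a + 1) a b (a * b))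
    \<and> sim_factors_quad (qform (diag_bil4 (a + 1) a b (a * b))) = gen_field squares {a, b} - {0}
    \<and> sim_factors_bil (diag_bil4 (a + 1) a b (a * b)) = gen_field squares {a} - {0}
    \<and> sim_factors_bil (diag_bil4 (a + 1) a b (a * b))
        \<subset> sim_factors_quad (qform (diag_bil4 (a + 1) a b (a * b)))"
proof -
  have q: "sim_factors_quad (qform (diag_bil4 (a + 1) a b (a * b))) = Lab - {0}"
    using Gq_sub Gq_sup by blast
  have bb: "sim_factors_bil (diag_bil4 (a + 1) a b (a * b)) = La - {0}"
    using Gb_sub Gb_sup by blast
  show ?thesis using aniso q bb strict gen_ab gen_a by simp
qed

end

theorem mainTheorem3:
  fixes a b :: "'a::field"
  assumes "CHAR('a) = 2"
    and "ext_degree_eq (gen_field squares {a, b}) squares 4"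
  shows "anisotropic_bil (diag_bil4 (a + 1) a b (a * b))
    \<and> sim_factors_quad (qform (diag_bil4 (a + 1) a b (a * b))) = gen_field squares {a, b} - {0}
    \<and> sim_factors_bil (diag_bil4 (a + 1) a b (a * b)) = gen_field squares {a} - {0}
    \<and> sim_factors_bil (diag_bil4 (a + 1) a b (a * b))
        \<subset> sim_factors_quad (qform (diag_bil4 (a + 1) a b (a * b)))"
proof -
  have two: "(2::'a) = 0" using assms(1) by (metis of_nat_CHAR of_nat_numeral)
  interpret ch2deg a b
    by unfold_locales (use two assms(2) in auto)
  show ?thesis by (rule main)
qed


end
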